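(* Let $f(x_1,x_2)=(-2+x_1+x_2)^2$ and $g(x_1,x_2)=1-x_1^2-x_2^2$. Although $f>0$ on $\{x\in\mathbb{R}^2: g(x)\geqslant 0\}$, there do not exist SDSOS polynomials $\sigma_0,\sigma_1$ (of any degree) such that $f=\sigma_0+\sigma_1 g$. Consequently there also do not exist DSOS polynomials $\sigma_0,\sigma_1$ with $f=\sigma_0+\sigma_1 g$.
   Context: For $\alpha\in\mathbb{N}^2$ write $x^\alpha=x_1^{\alpha_1}x_2^{\alpha_2}$. A polynomial is SDSOS (scaled diagonally-dominant sum of squares) if it is of the form $\sum_k (p_k x^{\alpha(k)}+q_k x^{\beta(k)})^2$ (finite sum) with $p_k,q_k\in\mathbb{R}$ and $\alpha(k),\beta(k)\in\mathbb{N}^2$. A polynomial is DSOS (diagonally-dominant sum of squares) if it is a finite nonnegative combination of polynomials of the forms $(x^\alpha)^2$, $(x^\alpha+x^\beta)^2$, $(x^\alpha-x^\beta)^2$ with $\alpha,\beta\in\mathbb{N}^2$; every DSOS polynomial is SDSOS. *)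

theory Defs
  imports Main "HOL.Real"
begin

text \<open>Polynomials in two real variables are represented by their polynomial functions
  on real x real (equality of polynomials over R coincides with equality of functions).\<close>

definition mono :: "nat \<times> nat \<Rightarrow> real \<times> real \<Rightarrow> real" where
  "mono \<alpha> x = fst x ^ fst \<alpha> * snd x ^ snd \<alpha>"

definition sdsos :: "(real \<times> real \<Rightarrow> real) \<Rightarrow> bool" where
  "sdsos \<sigma> \<longleftrightarrow> (\<exists>ts :: (real \<times> real \<times> (nat \<times> nat) \<times> (nat \<times> nat)) list.
     \<forall>x. \<sigma> x = (\<Sum>(p, q, \<alpha>, \<beta>)\<leftarrow>ts. (p * mono \<alpha> x + q * mono \<beta> x)^2))"

definition dsos :: "(real \<times> real \<Rightarrow> real) \<Rightarrow> bool" where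
  "dsos \<sigma> \<longleftrightarrow> (\<exists>(A :: (real \<times> (nat \<times> nat)) list)
                    (B :: (real \<times> (nat \<times> nat) \<times> (nat \<times> nat)) list)
                    (C :: (real \<times> (nat \<times> nat) \<times> (nat \<times> nat)) list).
     (\<forall>(c, _) \<in> set A. c \<ge> 0) \<and> (\<forall>(c, _) \<in> set B. c \<ge> 0) \<and> (\<forall>(c, _) \<in> set C. c \<ge> 0) \<and>
     (\<forall>x. \<sigma> x = (\<Sum>(c, \<alpha>)\<leftarrow>A. c * (mono \<alpha> x)^2)
               + (\<Sum>(c, \<alpha>, \<beta>)\<leftarrow>B. c * (mono \<alpha> x + mono \<beta> x)^2)
               + (\<Sum>(c, \<alpha>, \<beta>)\<leftarrow>C. c * (mono \<alpha> x - mono \<beta> x)^2)))"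

definition f3 :: "real \<times> real \<Rightarrow> real" where
  "f3 x = (-2 + fst x + snd x)^2"

definition g3 :: "real \<times> real \<Rightarrow> real" where
  "g3 x = 1 - (fst x)^2 - (snd x)^2"

end

theory Submission
  imports Defs
begin

definition LL :: "(real \<times> real \<Rightarrow> real) \<Rightarrow> real" where
  "LL h = h (3/5, 3/5) + h (3/5, -3/5) + h (-3/5, 3/5) - h (-3/5, -3/5)"

lemma LL_sum_list:
  "LL (\<lambda>x. sum_list (map (\<lambda>t. F t x) ts)) = sum_list (map (\<lambda>t. LL (F t)) ts)"
  by (induction ts) (simp_all add: LL_def algebra_simps)

lemma LL_cmult: "LL (\<lambda>x. c * h x) = c * LL h"
  by (simp add: LL_def algebra_simps)

lemma sign_cases: "(-1::real) ^ n = 1 \<or> (-1::real) ^ n = -1"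
  by (cases "even n") auto

lemma key_form:
  fixes P Q s1 s2 t1 t2 :: real
  assumes "s1 = 1 \<or> s1 = -1" "s2 = 1 \<or> s2 = -1" "t1 = 1 \<or> t1 = -1" "t2 = 1 \<or> t2 = -1"
  shows "(P+Q)^2 + (s2*P+t2*Q)^2 + (s1*P+t1*Q)^2 - (s1*s2*P+t1*t2*Q)^2 \<ge> 0"
proof -
  have p: "0 \<le> 2*(P+Q)^2" "0 \<le> 2*(P-Q)^2" by simp_all
  from assms show ?thesis
    by (elim disjE) (use p in \<open>simp_all add: power2_eq_square algebra_simps\<close>)
qed

lemma mono_signs:
  fixes r :: real
  shows "mono \<alpha> (r, -r) = (-1)^snd \<alpha> * mono \<alpha> (r, r)"
    and "mono \<alpha> (-r, r) = (-1)^fst \<alpha> * mono \<alpha> (r, r)"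
    and "mono \<alpha> (-r, -r) = (-1)^fst \<alpha> * (-1)^snd \<alpha> * mono \<alpha> (r, r)"
  by (simp_all add: mono_def power_minus[of r] algebra_simps)

lemma LL_binom: "LL (\<lambda>x. (p * mono \<alpha> x + q * mono \<beta> x)^2) \<ge> 0"
proof -
  define P where "P = p * mono \<alpha> (3/5, 3/5)"
  define Q where "Q = q * mono \<beta> (3/5, 3/5)"
  define s1 :: real where "s1 = (-1)^fst \<alpha>"
  define s2 :: real where "s2 = (-1)^snd \<alpha>"
  define t1 :: real where "t1 = (-1)^fst \<beta>"
  define t2 :: real where "t2 = (-1)^snd \<beta>"
  have e2: "p * mono \<alpha> (3/5, -3/5) + q * mono \<beta> (3/5, -3/5) = s2*P+t2*Q"
    using mono_signs(1)[of \<alpha> "3/5"] mono_signs(1)[of \<beta> "3/5"]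
    unfolding P_def Q_def s2_def t2_def by (simp only: mult_ac minus_divide_left)
  have e3: "p * mono \<alpha> (-3/5, 3/5) + q * mono \<beta> (-3/5, 3/5) = s1*P+t1*Q"
    using mono_signs(2)[of \<alpha> "3/5"] mono_signs(2)[of \<beta> "3/5"]
    unfolding P_def Q_def s1_def t1_def by (simp only: mult_ac minus_divide_left)
  have e4: "p * mono \<alpha> (-3/5, -3/5) + q * mono \<beta> (-3/5, -3/5) = s1*s2*P+t1*t2*Q"
    using mono_signs(3)[of \<alpha> "3/5"] mono_signs(3)[of \<beta> "3/5"]
    unfolding P_def Q_def s1_def t1_def s2_def t2_def by (simp only: mult_ac minus_divide_left)
  have "LL (\<lambda>x. (p * mono \<alpha> x + q * mono \<beta> x)^2)
     = (P+Q)^2 + (s2*P+t2*Q)^2 + (s1*P+t1*Q)^2 - (s1*s2*P+t1*t2*Q)^2"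
    unfolding LL_def e2 e3 e4 P_def Q_def by simp
  also have "\<dots> \<ge> 0"
    by (rule key_form) (unfold s1_def s2_def t1_def t2_def; rule sign_cases)+
  finally show ?thesis .
qed

lemma LL_sdsos: assumes "sdsos \<sigma>" shows "LL \<sigma> \<ge> 0"
proof -
  obtain ts :: "(real \<times> real \<times> (nat \<times> nat) \<times> (nat \<times> nat)) list" where
    ts: "\<forall>x. \<sigma> x = (\<Sum>(p, q, \<alpha>, \<beta>)\<leftarrow>ts. (p * mono \<alpha> x + q * mono \<beta> x)^2)"
    using assms unfolding sdsos_def by blast
  define F where "F = (\<lambda>(p::real, q::real, \<alpha>::nat\<times>nat, \<beta>::nat\<times>nat) (x::real\<times>real). (p * mono \<alpha> x + q * mono \<beta> x)^2)"
  have "\<sigma> = (\<lambda>x. sum_list (map (\<lambda>t. F t x) ts))"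
  proof
    fix x
    have eq: "(\<lambda>(p, q, \<alpha>, \<beta>). (p * mono \<alpha> x + q * mono \<beta> x)^2) = (\<lambda>t. F t x)"
      by (auto simp: F_def)
    have h: "\<sigma> x = (\<Sum>(p, q, \<alpha>, \<beta>)\<leftarrow>ts. (p * mono \<alpha> x + q * mono \<beta> x)^2)"
      using ts by blast
    show "\<sigma> x = sum_list (map (\<lambda>t. F t x) ts)" unfolding h eq ..
  qed
  then have "LL \<sigma> = sum_list (map (\<lambda>t. LL (F t)) ts)"
    by (simp only: LL_sum_list)
  also have "\<dots> \<ge> 0"
  proof (rule sum_list_nonneg)
    fix y assume "y \<in> set (map (\<lambda>t. LL (F t)) ts)"
    then obtain p q \<alpha> \<beta> where y: "y = LL (F (p, q, \<alpha>, \<beta>))" by auto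
    show "0 \<le> y" unfolding y F_def by (simp add: LL_binom)
  qed
  finally show ?thesis .
qed

lemma LL_dsos: assumes "dsos \<sigma>" shows "LL \<sigma> \<ge> 0"
proof -
  obtain A :: "(real \<times> (nat \<times> nat)) list"
    and B C :: "(real \<times> (nat \<times> nat) \<times> (nat \<times> nat)) list" where
    pos: "(\<forall>(c, _) \<in> set A. c \<ge> 0)" "(\<forall>(c, _) \<in> set B. c \<ge> 0)" "(\<forall>(c, _) \<in> set C. c \<ge> 0)" and
    eq: "\<forall>x. \<sigma> x = (\<Sum>(c, \<alpha>)\<leftarrow>A. c * (mono \<alpha> x)^2)
               + (\<Sum>(c, \<alpha>, \<beta>)\<leftarrow>B. c * (mono \<alpha> x + mono \<beta> x)^2)
               + (\<Sum>(c, \<alpha>, \<beta>)\<leftarrow>C. c * (mono \<alpha> x - mono \<beta> x)^2)"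
    using assms unfolding dsos_def by blast
  define FA where "FA = (\<lambda>(c::real, \<alpha>::nat\<times>nat) (x::real\<times>real). c * (mono \<alpha> x)^2)"
  define FB where "FB = (\<lambda>(c::real, \<alpha>::nat\<times>nat, \<beta>::nat\<times>nat) (x::real\<times>real). c * (mono \<alpha> x + mono \<beta> x)^2)"
  define FC where "FC = (\<lambda>(c::real, \<alpha>::nat\<times>nat, \<beta>::nat\<times>nat) (x::real\<times>real). c * (mono \<alpha> x - mono \<beta> x)^2)"
  have s: "\<sigma> = (\<lambda>x. sum_list (map (\<lambda>t. FA t x) A) + sum_list (map (\<lambda>t. FB t x) B)
      + sum_list (map (\<lambda>t. FC t x) C))"
  proof
    fix x
    have ea: "(\<lambda>(c, \<alpha>). c * (mono \<alpha> x)^2) = (\<lambda>t. FA t x)" by (auto simp: FA_def)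
    have eb: "(\<lambda>(c, \<alpha>, \<beta>). c * (mono \<alpha> x + mono \<beta> x)^2) = (\<lambda>t. FB t x)" by (auto simp: FB_def)
    have ec: "(\<lambda>(c, \<alpha>, \<beta>). c * (mono \<alpha> x - mono \<beta> x)^2) = (\<lambda>t. FC t x)" by (auto simp: FC_def)
    have h: "\<sigma> x = (\<Sum>(c, \<alpha>)\<leftarrow>A. c * (mono \<alpha> x)^2)
               + (\<Sum>(c, \<alpha>, \<beta>)\<leftarrow>B. c * (mono \<alpha> x + mono \<beta> x)^2)
               + (\<Sum>(c, \<alpha>, \<beta>)\<leftarrow>C. c * (mono \<alpha> x - mono \<beta> x)^2)"
      using eq by blast
    show "\<sigma> x = sum_list (map (\<lambda>t. FA t x) A) + sum_list (map (\<lambda>t. FB t x) B)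
      + sum_list (map (\<lambda>t. FC t x) C)" unfolding h ea eb ec ..
  qed
  have add: "LL (\<lambda>x. u x + v x) = LL u + LL v" for u v
    by (simp add: LL_def algebra_simps)
  have a: "LL (\<lambda>x. sum_list (map (\<lambda>t. FA t x) A)) \<ge> 0"
    unfolding LL_sum_list
  proof (rule sum_list_nonneg)
    fix y assume "y \<in> set (map (\<lambda>t. LL (FA t)) A)"
    then obtain c \<alpha> where ca: "(c, \<alpha>) \<in> set A" and y: "y = LL (FA (c, \<alpha>))" by auto
    have "c \<ge> 0" using pos(1) ca by auto
    moreover have "LL (\<lambda>x. (1 * mono \<alpha> x + 0 * mono \<alpha> x)^2) \<ge> 0" by (rule LL_binom)
    ultimately show "0 \<le> y" unfolding y FA_def by (simp add: LL_cmult)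
  qed
  have b: "LL (\<lambda>x. sum_list (map (\<lambda>t. FB t x) B)) \<ge> 0"
    unfolding LL_sum_list
  proof (rule sum_list_nonneg)
    fix y assume "y \<in> set (map (\<lambda>t. LL (FB t)) B)"
    then obtain c \<alpha> \<beta> where ca: "(c, \<alpha>, \<beta>) \<in> set B" and y: "y = LL (FB (c, \<alpha>, \<beta>))" by auto
    have "c \<ge> 0" using pos(2) ca by auto
    moreover have "LL (\<lambda>x. (1 * mono \<alpha> x + 1 * mono \<beta> x)^2) \<ge> 0" by (rule LL_binom)
    ultimately show "0 \<le> y" unfolding y FB_def by (simp add: LL_cmult)
  qed
  have c: "LL (\<lambda>x. sum_list (map (\<lambda>t. FC t x) C)) \<ge> 0"
    unfolding LL_sum_list
  proof (rule sum_list_nonneg)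
    fix y assume "y \<in> set (map (\<lambda>t. LL (FC t)) C)"
    then obtain c \<alpha> \<beta> where ca: "(c, \<alpha>, \<beta>) \<in> set C" and y: "y = LL (FC (c, \<alpha>, \<beta>))" by auto
    have "c \<ge> 0" using pos(3) ca by auto
    moreover have "LL (\<lambda>x. (1 * mono \<alpha> x + (-1) * mono \<beta> x)^2) \<ge> 0" by (rule LL_binom)
    ultimately show "0 \<le> y" unfolding y FC_def by (simp add: LL_cmult)
  qed
  show ?thesis unfolding s add using a b c by linarith
qed

lemma no_rep:
  assumes "LL \<sigma>0 \<ge> 0" "LL \<sigma>1 \<ge> 0" "\<forall>x. f3 x = \<sigma>0 x + \<sigma>1 x * g3 x"
  shows False
proof -
  have g: "g3 (3/5, 3/5) = 7/25" "g3 (3/5, -(3/5)) = 7/25" "g3 (-(3/5), 3/5) = 7/25"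
    "g3 (-(3/5), -(3/5)) = 7/25" by (simp_all add: g3_def power2_eq_square)
  have f: "f3 (3/5, 3/5) = 16/25" "f3 (3/5, -(3/5)) = 4" "f3 (-(3/5), 3/5) = 4"
    "f3 (-(3/5), -(3/5)) = 256/25" by (simp_all add: f3_def power2_eq_square)
  have e: "f3 (3/5, 3/5) = \<sigma>0 (3/5, 3/5) + \<sigma>1 (3/5, 3/5) * (7/25)"
    "f3 (3/5, -(3/5)) = \<sigma>0 (3/5, -(3/5)) + \<sigma>1 (3/5, -(3/5)) * (7/25)"
    "f3 (-(3/5), 3/5) = \<sigma>0 (-(3/5), 3/5) + \<sigma>1 (-(3/5), 3/5) * (7/25)"
    "f3 (-(3/5), -(3/5)) = \<sigma>0 (-(3/5), -(3/5)) + \<sigma>1 (-(3/5), -(3/5)) * (7/25)"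
    using assms(3) g by metis+
  show False using assms(1,2) e f unfolding LL_def by (simp only: minus_divide_left)
qed

theorem mainTheorem3:
  shows "(\<forall>x. g3 x \<ge> 0 \<longrightarrow> f3 x > 0)
    \<and> \<not> (\<exists>\<sigma>0 \<sigma>1. sdsos \<sigma>0 \<and> sdsos \<sigma>1 \<and> (\<forall>x. f3 x = \<sigma>0 x + \<sigma>1 x * g3 x))
    \<and> \<not> (\<exists>\<sigma>0 \<sigma>1. dsos \<sigma>0 \<and> dsos \<sigma>1 \<and> (\<forall>x. f3 x = \<sigma>0 x + \<sigma>1 x * g3 x))"
proof (intro conjI allI impI notI)
  fix x :: "real \<times> real"
  assume "g3 x \<ge> 0"
  then have h: "fst x ^ 2 + snd x ^ 2 \<le> 1" by (simp add: g3_def)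
  have "fst x + snd x < 2"
  proof (rule ccontr)
    assume "\<not> fst x + snd x < 2"
    then have "2 \<le> fst x + snd x" by simp
    then have "2^2 \<le> (fst x + snd x)^2" by (rule power_mono) simp
    moreover have "0 \<le> (fst x - snd x)^2" by simp
    ultimately show False using h by (simp add: power2_eq_square algebra_simps)
  qed
  then show "f3 x > 0" by (simp add: f3_def)
next
  assume "\<exists>\<sigma>0 \<sigma>1. sdsos \<sigma>0 \<and> sdsos \<sigma>1 \<and> (\<forall>x. f3 x = \<sigma>0 x + \<sigma>1 x * g3 x)"
  then show False using no_rep LL_sdsos by blast
next
  assume "\<exists>\<sigma>0 \<sigma>1. dsos \<sigma>0 \<and> dsos \<sigma>1 \<and> (\<forall>x. f3 x = \<sigma>0 x + \<sigma>1 x * g3 x)"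
  then show False using no_rep LL_dsos by blast
qed

end
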